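(* Let $\Lambda=\{\frac{1}{n+1}:n\in\mathbb{N}_0\}$ and $\Lambda_0=\Lambda\cup\{0\}$. For each $t\in[0,1)$, $$\sigma_{pt}(C_t;H(\mathbb{D}))=\sigma(C_t;H(\mathbb{D}))=\Lambda\quad\text{and}\quad\sigma^*(C_t;H(\mathbb{D}))=\Lambda_0.$$
   Context: $\mathbb{N}_0=\{0,1,2,\dots\}$, $\mathbb{D}=\{z\in\mathbb{C}:|z|<1\}$, and $H(\mathbb{D})$ is the Fréchet space of holomorphic functions on $\mathbb{D}$ with the topology of uniform convergence on compact subsets. For $t\in[0,1]$, $C_t$ is defined on $f\in H(\mathbb{D})$ by $C_tf(0)=f(0)$ and $C_tf(z)=\frac{1}{z}\int_0^z\frac{f(\xi)}{1-t\xi}\,d\xi$ for $z\neq0$. For a continuous linear operator $T$ on a locally convex Hausdorff space $X$: the resolvent set $\rho(T;X)$ is the set of $\lambda\in\mathbb{C}$ such that $(\lambda I-T)^{-1}$ exists as a continuous linear operator on $X$, $\sigma(T;X)=\mathbb{C}\setminus\rho(T;X)$, and $\sigma_{pt}(T;X)$ is the set of $\lambda$ for which $\lambda I-T$ is not injective. $\rho^*(T;X)$ is the set of $\lambda\in\mathbb{C}$ for which there is $\delta>0$ with $\{\mu:|\mu-\lambda|<\delta\}\subseteq\rho(T;X)$ and $\{(\mu I-T)^{-1}:|\mu-\lambda|<\delta\}$ equicontinuous in the space of continuous linear operators on $X$; $\sigma^*(T;X)=\mathbb{C}\setminus\rho^*(T;X)$. *)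

theory Defs
  imports "HOL-Complex_Analysis.Complex_Analysis"
begin

text \<open>The space H(D): functions holomorphic on the open unit disc. Two functions
  are identified when they agree on the disc; all equations below are stated on the disc.\<close>

definition HD :: "(complex \<Rightarrow> complex) set" where
  "HD = {f. f holomorphic_on ball 0 1}"

definition Ct :: "real \<Rightarrow> (complex \<Rightarrow> complex) \<Rightarrow> (complex \<Rightarrow> complex)" where
  "Ct t f = (\<lambda>z. if z = 0 then f 0
      else (1 / z) * contour_integral (linepath 0 z) (\<lambda>\<xi>. f \<xi> / (1 - complex_of_real t * \<xi>)))"

definition lin_op :: "((complex \<Rightarrow> complex) \<Rightarrow> (complex \<Rightarrow> complex)) \<Rightarrow> bool" where
  "lin_op T \<longleftrightarrow> (\<forall>f\<in>HD. T f \<in> HD) \<and>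
     (\<forall>f\<in>HD. \<forall>g\<in>HD. \<forall>z\<in>ball 0 1. T (\<lambda>w. f w + g w) z = T f z + T g z) \<and>
     (\<forall>f\<in>HD. \<forall>c. \<forall>z\<in>ball 0 1. T (\<lambda>w. c * f w) z = c * T f z)"

text \<open>Equicontinuity of a family of linear operators w.r.t. the topology of uniform
  convergence on compact subsets of D (generated by the seminorms sup_K |f|,
  K compact in D). A single operator is continuous iff the singleton family is equicontinuous.\<close>

definition equicont_ops :: "((complex \<Rightarrow> complex) \<Rightarrow> (complex \<Rightarrow> complex)) set \<Rightarrow> bool" where
  "equicont_ops \<T> \<longleftrightarrow> (\<forall>K. compact K \<and> K \<subseteq> ball 0 1 \<longrightarrow>
     (\<exists>K' C. compact K' \<and> K' \<noteq> {} \<and> K' \<subseteq> ball 0 1 \<and>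
        (\<forall>T\<in>\<T>. \<forall>f\<in>HD. \<forall>z\<in>K. norm (T f z) \<le> C * (SUP w\<in>K'. norm (f w)))))"

definition cont_lin_op :: "((complex \<Rightarrow> complex) \<Rightarrow> (complex \<Rightarrow> complex)) \<Rightarrow> bool" where
  "cont_lin_op T \<longleftrightarrow> lin_op T \<and> equicont_ops {T}"

definition is_inverse_of :: "((complex \<Rightarrow> complex) \<Rightarrow> (complex \<Rightarrow> complex)) \<Rightarrow> complex
     \<Rightarrow> ((complex \<Rightarrow> complex) \<Rightarrow> (complex \<Rightarrow> complex)) \<Rightarrow> bool" where
  "is_inverse_of T lam S \<longleftrightarrow> (\<forall>g\<in>HD. S g \<in> HD) \<and>
     (\<forall>g\<in>HD. \<forall>z\<in>ball 0 1. lam * S g z - T (S g) z = g z) \<and>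
     (\<forall>f\<in>HD. \<forall>z\<in>ball 0 1. S (\<lambda>w. lam * f w - T f w) z = f z)"

definition resolvent_set :: "((complex \<Rightarrow> complex) \<Rightarrow> (complex \<Rightarrow> complex)) \<Rightarrow> complex set" where
  "resolvent_set T = {lam. \<exists>S. cont_lin_op S \<and> is_inverse_of T lam S}"

definition spectrum_H :: "((complex \<Rightarrow> complex) \<Rightarrow> (complex \<Rightarrow> complex)) \<Rightarrow> complex set" where
  "spectrum_H T = - resolvent_set T"

definition point_spectrum_H :: "((complex \<Rightarrow> complex) \<Rightarrow> (complex \<Rightarrow> complex)) \<Rightarrow> complex set" where
  "point_spectrum_H T = {lam. \<exists>f\<in>HD. (\<exists>z\<in>ball 0 1. f z \<noteq> 0) \<and>
      (\<forall>z\<in>ball 0 1. lam * f z - T f z = 0)}"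

definition resolvent_star :: "((complex \<Rightarrow> complex) \<Rightarrow> (complex \<Rightarrow> complex)) \<Rightarrow> complex set" where
  "resolvent_star T = {lam. \<exists>\<delta>>0. ball lam \<delta> \<subseteq> resolvent_set T \<and>
      equicont_ops {S. \<exists>mu\<in>ball lam \<delta>. cont_lin_op S \<and> is_inverse_of T mu S}}"

definition spectrum_star :: "((complex \<Rightarrow> complex) \<Rightarrow> (complex \<Rightarrow> complex)) \<Rightarrow> complex set" where
  "spectrum_star T = - resolvent_star T"

end

theory Submission
  imports Defs
begin


definition tay :: "(complex \<Rightarrow> complex) \<Rightarrow> complex fps" where
  "tay f = Abs_fps (\<lambda>n. (deriv ^^ n) f 0 / fact n)"

lemma tay_radius:
  assumes "f \<in> HD" shows "fps_conv_radius (tay f) \<ge> 1"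
  unfolding fps_conv_radius_def
proof (rule conv_radius_geI_ex')
  fix r :: real assume r: "0 < r" "ereal r < 1"
  have "(\<lambda>n. (deriv ^^ n) f 0 / (fact n) * (complex_of_real r - 0)^n) sums f (complex_of_real r)"
    using assms r by (intro holomorphic_power_series) (auto simp: HD_def)
  then show "summable (\<lambda>n. fps_nth (tay f) n * of_real r ^ n)"
    by (simp add: tay_def sums_iff)
qed

lemma tay_eval:
  assumes "f \<in> HD" "z \<in> ball 0 1" shows "eval_fps (tay f) z = f z"
proof -
  have "(\<lambda>n. (deriv ^^ n) f 0 / (fact n) * (z - 0)^n) sums f z"
    using assms by (intro holomorphic_power_series) (auto simp: HD_def)
  then show ?thesis by (simp add: tay_def eval_fps_def sums_iff)
qed

lemma tay_unique:
  assumes "fps_conv_radius F \<ge> 1" "\<And>z. z \<in> ball 0 1 \<Longrightarrow> f z = eval_fps F z"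
  shows "tay f = F"
proof -
  have "eventually (\<lambda>z. z \<in> ball (0::complex) 1) (nhds 0)"
    by (intro eventually_nhds_in_open) auto
  then have ev: "eventually (\<lambda>z. eval_fps F z = f z) (nhds 0)"
    by eventually_elim (use assms(2) in auto)
  have "fps_conv_radius F > 0" 
    by (rule less_le_trans[OF _ assms(1)]) simp
  with ev have "f has_fps_expansion F" by (simp add: has_fps_expansion_def)
  note e = fps_nth_fps_expansion[OF this]
  show ?thesis
    by (rule fps_ext) (simp only: tay_def fps_nth_Abs_fps e)
qed

definition Gt :: "real \<Rightarrow> complex fps" where
  "Gt t = Abs_fps (\<lambda>n. complex_of_real t ^ n)"

lemma Gt_radius:
  assumes "0 \<le> t" "t < 1" shows "fps_conv_radius (Gt t) \<ge> 1"
  unfolding fps_conv_radius_def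
proof (rule conv_radius_geI_ex')
  fix r :: real assume r: "0 < r" "ereal r < 1"
  have "norm (complex_of_real t * of_real r) < 1"
  proof -
    have "t * r \<le> 1 * r" using assms r by (intro mult_right_mono) auto
    moreover have "norm (complex_of_real t * of_real r) = t * r"
      using r assms by (simp add: norm_mult abs_of_nonneg)
    moreover have "r < 1" using r by simp
    ultimately show ?thesis by linarith
  qed
  then have "summable (\<lambda>n. (complex_of_real t * of_real r) ^ n)"
    by (rule summable_geometric)
  then show "summable (\<lambda>n. fps_nth (Gt t) n * of_real r ^ n)"
    by (simp add: Gt_def power_mult_distrib)
qed

lemma Gt_eval:
  assumes "0 \<le> t" "t < 1" "z \<in> ball 0 1"
  shows "eval_fps (Gt t) z = 1 / (1 - complex_of_real t * z)"
proof -
  have "norm (complex_of_real t * z) < 1"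
  proof -
    have "t * norm z \<le> 1 * norm z" using assms by (intro mult_right_mono) auto
    moreover have "norm (complex_of_real t * z) = t * norm z"
      using assms by (simp add: norm_mult abs_of_nonneg)
    ultimately show ?thesis using assms by simp
  qed
  then have "(\<lambda>n. (complex_of_real t * z) ^ n) sums (1 / (1 - complex_of_real t * z))"
    by (rule geometric_sums)
  then show ?thesis by (simp add: Gt_def eval_fps_def sums_iff power_mult_distrib)
qed



definition Cf :: "real \<Rightarrow> complex fps \<Rightarrow> complex fps" where
  "Cf t H = Abs_fps (\<lambda>k. (H * Gt t) $ k / of_nat (Suc k))"

lemma Gt_nth [simp]: "Gt t $ n = complex_of_real t ^ n"
  by (simp add: Gt_def)

lemma HG_0: "(H * Gt t) $ 0 = H $ 0"
  by (simp add: fps_mult_nth Gt_def)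

lemma HG_Suc: "(H * Gt t) $ Suc k = H $ Suc k + of_real t * (H * Gt t) $ k"
proof -
  have "(H * Gt t) $ Suc k = (\<Sum>i=0..Suc k. H$i * of_real t ^ (Suc k - i))"
    by (simp add: fps_mult_nth Gt_def)
  also have "\<dots> = H $ Suc k + (\<Sum>i=0..k. H$i * of_real t ^ (Suc k - i))"
    by (simp add: sum.atLeast0_atMost_Suc)
  also have "(\<Sum>i=0..k. H$i * of_real t ^ (Suc k - i)) = of_real t * (\<Sum>i=0..k. H$i * of_real t ^ (k - i))"
    by (simp add: sum_distrib_left Suc_diff_le algebra_simps)
  also have "(\<Sum>i=0..k. H$i * of_real t ^ (k - i)) = (H * Gt t) $ k"
    by (simp add: fps_mult_nth Gt_def)
  finally show ?thesis .
qed

lemma HG_radius: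
  assumes "fps_conv_radius H \<ge> 1" "0 \<le> t" "t < 1"
  shows "fps_conv_radius (H * Gt t) \<ge> 1"
  using fps_conv_radius_mult[of H "Gt t"] Gt_radius[OF assms(2,3)] assms(1)
  by (meson min.bounded_iff order_trans)

lemma Cf_radius:
  assumes "fps_conv_radius H \<ge> 1" "0 \<le> t" "t < 1"
  shows "fps_conv_radius (Cf t H) \<ge> 1"
  unfolding fps_conv_radius_def
proof (rule conv_radius_geI_ex')
  fix r :: real assume r: "0 < r" "ereal r < 1"
  have "ereal (norm (complex_of_real r)) < fps_conv_radius (H * Gt t)"
    using less_le_trans[OF r(2) HG_radius[OF assms]] r(1) by (simp add: abs_of_pos)
  then have s: "summable (\<lambda>n. norm ((H * Gt t) $ n * complex_of_real r ^ n))"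
    by (rule norm_summable_fps)
  show "summable (\<lambda>n. fps_nth (Cf t H) n * of_real r ^ n)"
  proof (rule summable_comparison_test'[OF s])
    fix n :: nat
    have "norm (fps_nth (Cf t H) n * of_real r ^ n) = norm ((H * Gt t) $ n * complex_of_real r ^ n) / real (Suc n)"
      by (simp add: Cf_def norm_mult norm_divide norm_of_nat del: of_nat_Suc)
    also have "\<dots> \<le> norm ((H * Gt t) $ n * complex_of_real r ^ n)"
    proof -
      have "norm ((H * Gt t) $ n * complex_of_real r ^ n) * 1 \<le> norm ((H * Gt t) $ n * complex_of_real r ^ n) * real (Suc n)"
        by (intro mult_left_mono) auto
      then show ?thesis by (simp add: divide_le_eq del: of_nat_Suc)
    qed
    finally show "norm (fps_nth (Cf t H) n * of_real r ^ n) \<le> norm ((H * Gt t) $ n * complex_of_real r ^ n)" .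
  qed
qed

lemma Ct_eval:
  assumes f: "f \<in> HD" and t: "0 \<le> t" "t < 1" and z: "z \<in> ball 0 1"
  shows "Ct t f z = eval_fps (Cf t (tay f)) z"
proof -
  define P where "P = fps_X * Cf t (tay f)"
  have rC: "fps_conv_radius (Cf t (tay f)) \<ge> 1"
    using Cf_radius[OF tay_radius[OF f] t] .
  have rP: "fps_conv_radius P \<ge> 1"
    using fps_conv_radius_mult[of fps_X "Cf t (tay f)"] rC by (simp add: P_def)
  have dP: "fps_deriv P = tay f * Gt t"
  proof (rule fps_ext)
    fix n
    have nz: "complex_of_nat (Suc n) \<noteq> 0" by (simp only: of_nat_eq_0_iff)
    have "P $ (n+1) = (tay f * Gt t) $ n / of_nat (Suc n)"
      by (simp add: P_def Cf_def del: of_nat_Suc)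
    then have "fps_deriv P $ n = of_nat (Suc n) * ((tay f * Gt t) $ n / of_nat (Suc n))"
      by (simp only: fps_deriv_nth Suc_eq_plus1)
    also have "\<dots> = (tay f * Gt t) $ n" using nz by simp
    finally show "fps_deriv P $ n = (tay f * Gt t) $ n" .
  qed
  have inb: "\<And>x. x \<in> ball 0 1 \<Longrightarrow> ereal (norm x) < fps_conv_radius P"
    using rP by (simp) (meson less_le_trans ereal_less(3) less_ereal.simps(1))
  have der: "\<And>x. x \<in> ball 0 1 \<Longrightarrow> (eval_fps P has_field_derivative eval_fps (fps_deriv P) x) (at x within ball 0 1)"
    by (rule has_field_derivative_eval_fps) (rule inb)
  have pi: "path_image (linepath 0 z) \<subseteq> ball 0 1"
    using z by (simp add: closed_segment_subset)
  have hc: "((\<lambda>x. eval_fps (fps_deriv P) x) has_contour_integral (eval_fps P z - eval_fps P 0)) (linepath 0 z)"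
    using contour_integral_primitive[OF der _ pi] by simp
  have eq: "eval_fps (fps_deriv P) x = f x / (1 - complex_of_real t * x)" if "x \<in> ball 0 1" for x
  proof -
    have "ereal (norm x) < 1" using that by simp
    then have a: "ereal (norm x) < fps_conv_radius (tay f)" "ereal (norm x) < fps_conv_radius (Gt t)"
      using tay_radius[OF f] Gt_radius[OF t] less_le_trans by blast+
    show ?thesis unfolding dP eval_fps_mult[OF a]
      using tay_eval[OF f that] Gt_eval[OF t that] by simp
  qed
  have hc2: "((\<lambda>x. f x / (1 - complex_of_real t * x)) has_contour_integral eval_fps P z) (linepath 0 z)"
  proof -
    have "eval_fps P 0 = 0" by (simp add: eval_fps_at_0 P_def)
    with hc have hc': "((\<lambda>x. eval_fps (fps_deriv P) x) has_contour_integral (eval_fps P z)) (linepath 0 z)"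
      by simp
    show ?thesis
      by (rule has_contour_integral_eq[OF hc']) (use eq pi in blast)
  qed
  have ez: "eval_fps P z = z * eval_fps (Cf t (tay f)) z"
  proof -
    have "ereal (norm z) < fps_conv_radius (Cf t (tay f))"
      using z rC less_le_trans by (metis ereal_less(3) mem_ball_0 less_ereal.simps(1))
    then show ?thesis unfolding P_def by (subst eval_fps_mult) auto
  qed
  show ?thesis
  proof (cases "z = 0")
    case True then show ?thesis
      by (simp add: Ct_def eval_fps_at_0 Cf_def HG_0 tay_def Gt_def)
  next
    case False
    then show ?thesis using contour_integral_unique[OF hc2] ez by (simp add: Ct_def)
  qed
qed


lemma ereal_lt1_le: "ereal (norm z) < 1 \<Longrightarrow> 1 \<le> R \<Longrightarrow> ereal (norm z) < R"
  using less_le_trans by blast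

lemma ball_eball1: "1 \<le> R \<Longrightarrow> ball (0::complex) 1 \<subseteq> eball 0 R"
  by (rule ball_eball_mono) (simp add: one_ereal_def)

lemma Ct_HD:
  assumes "f \<in> HD" "0 \<le> t" "t < 1" shows "Ct t f \<in> HD"
proof -
  have "eval_fps (Cf t (tay f)) holomorphic_on ball 0 1"
    by (rule holomorphic_on_eval_fps, rule ball_eball1, rule Cf_radius[OF tay_radius]) (use assms in auto)
  then show ?thesis unfolding HD_def
    using holomorphic_cong[of "ball 0 1" "ball 0 1" "Ct t f" "eval_fps (Cf t (tay f))"] Ct_eval[OF assms]
    by auto
qed

lemma tay_Ct:
  assumes "f \<in> HD" "0 \<le> t" "t < 1" shows "tay (Ct t f) = Cf t (tay f)"
  by (rule tay_unique[OF Cf_radius[OF tay_radius]]) (use assms Ct_eval in auto)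

lemma radius_const_mult: "fps_conv_radius (F::complex fps) \<ge> 1 \<Longrightarrow> fps_conv_radius (fps_const c * F) \<ge> 1"
  using fps_conv_radius_mult[of "fps_const c" F] by simp

lemma eval_const_mult:
  fixes F :: "complex fps"
  assumes "fps_conv_radius F \<ge> 1" "z \<in> ball 0 1"
  shows "eval_fps (fps_const c * F) z = c * eval_fps F z"
proof -
  have "ereal (norm z) < fps_conv_radius F" using assms ereal_lt1_le by simp
  then show ?thesis using eval_fps_mult[of z "fps_const c" F] by simp
qed

lemma radius_diff1: "fps_conv_radius F \<ge> 1 \<Longrightarrow> fps_conv_radius G \<ge> 1 \<Longrightarrow> fps_conv_radius (F - G) \<ge> 1"
  using fps_conv_radius_diff[of F G] by (meson min.bounded_iff order_trans)

lemma radius_add1: "fps_conv_radius F \<ge> 1 \<Longrightarrow> fps_conv_radius G \<ge> 1 \<Longrightarrow> fps_conv_radius (F + G) \<ge> 1"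
  using fps_conv_radius_add[of F G] by (meson min.bounded_iff order_trans)

lemma eval_diff1:
  assumes "fps_conv_radius F \<ge> 1" "fps_conv_radius G \<ge> 1" "z \<in> ball 0 1"
  shows "eval_fps (F - G) z = eval_fps F z - eval_fps G z"
  using assms by (intro eval_fps_diff) (auto intro: ereal_lt1_le)

lemma eval_add1:
  assumes "fps_conv_radius F \<ge> 1" "fps_conv_radius G \<ge> 1" "z \<in> ball 0 1"
  shows "eval_fps (F + G) z = eval_fps F z + eval_fps G z"
  using assms by (intro eval_fps_add) (auto intro: ereal_lt1_le)

lemma tay_Lm:
  assumes "f \<in> HD" "0 \<le> t" "t < 1"
  shows "tay (\<lambda>w. mu * f w - Ct t f w) = fps_const mu * tay f - Cf t (tay f)"
proof (rule tay_unique)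
  have r1: "fps_conv_radius (tay f) \<ge> 1" using tay_radius[OF assms(1)] .
  have r2: "fps_conv_radius (Cf t (tay f)) \<ge> 1" using Cf_radius[OF r1 assms(2,3)] .
  show "fps_conv_radius (fps_const mu * tay f - Cf t (tay f)) \<ge> 1"
    by (intro radius_diff1 radius_const_mult r1 r2)
  fix z :: complex assume z: "z \<in> ball 0 1"
  show "mu * f z - Ct t f z = eval_fps (fps_const mu * tay f - Cf t (tay f)) z"
    using z r1 r2 by (simp add: eval_diff1 radius_const_mult eval_const_mult tay_eval[OF assms(1) z] Ct_eval[OF assms z])
qed

lemma tay_add:
  assumes "f \<in> HD" "g \<in> HD"
  shows "tay (\<lambda>w. f w + g w) = tay f + tay g"
  by (rule tay_unique) (use assms tay_radius tay_eval radius_add1[OF tay_radius tay_radius] eval_add1[OF tay_radius tay_radius] in auto)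

lemma tay_cmult:
  assumes "f \<in> HD"
  shows "tay (\<lambda>w. c * f w) = fps_const c * tay f"
  by (rule tay_unique) (use assms tay_radius tay_eval radius_const_mult[OF tay_radius] eval_const_mult[OF tay_radius] in auto)

fun sol :: "real \<Rightarrow> complex \<Rightarrow> complex fps \<Rightarrow> nat \<Rightarrow> complex" where
  "sol t mu C 0 = C $ 0 / (mu - 1)"
| "sol t mu C (Suc k) = (C $ Suc k + mu * of_real t * sol t mu C k) / (mu - 1 / of_nat (Suc (Suc k)))"

definition solF :: "real \<Rightarrow> complex \<Rightarrow> complex fps \<Rightarrow> complex fps" where
  "solF t mu C = Abs_fps (\<lambda>k. case k of 0 \<Rightarrow> sol t mu C 0 | Suc j \<Rightarrow> sol t mu C (Suc j) - of_real t * sol t mu C j)"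

definition Lam :: "complex set" where
  "Lam = {1 / of_nat (n + 1) | n :: nat. True}"

lemma notLam_ne: "mu \<notin> Lam \<Longrightarrow> mu - 1 / of_nat (Suc k) \<noteq> 0"
  unfolding Lam_def by auto

lemma notLam_ne1: "mu \<notin> Lam \<Longrightarrow> mu - 1 \<noteq> 0"
  using notLam_ne[of mu 0] by simp

lemma coeff_Lm: "(fps_const mu * H - Cf t H) $ k = mu * H $ k - (H * Gt t) $ k / of_nat (Suc k)"
  by (simp add: Cf_def)

lemma uniq_HG:
  assumes "mu \<notin> Lam" "fps_const mu * H - Cf t H = C"
  shows "(H * Gt t) $ k = sol t mu C k"
proof (induction k)
  case 0
  have "C $ 0 = mu * H $ 0 - H $ 0" using coeff_Lm[of mu H t 0] assms(2) by (simp add: HG_0)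
  then have "C $ 0 = (mu - 1) * H $ 0" by (simp add: algebra_simps)
  then show ?case using notLam_ne1[OF assms(1)] by (simp add: HG_0)
next
  case (Suc k)
  have e: "C $ Suc k = mu * H $ Suc k - (H * Gt t) $ Suc k / of_nat (Suc (Suc k))"
    using coeff_Lm[of mu H t "Suc k"] assms(2) by simp
  have h: "H $ Suc k = (H * Gt t) $ Suc k - of_real t * sol t mu C k"
    using HG_Suc[of H t k] Suc.IH by simp
  have "C $ Suc k + mu * of_real t * sol t mu C k = (H * Gt t) $ Suc k * (mu - 1 / of_nat (Suc (Suc k)))"
    using e h by (simp add: algebra_simps)
  then show ?case using notLam_ne[OF assms(1), of "Suc k"]
    by (simp add: field_simps)
qed

lemma uniq:
  assumes "mu \<notin> Lam" "fps_const mu * H - Cf t H = C"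
  shows "H = solF t mu C"
proof (rule fps_ext)
  fix k show "H $ k = solF t mu C $ k"
  proof (cases k)
    case 0 then show ?thesis using uniq_HG[OF assms, of 0] by (simp add: solF_def HG_0)
  next
    case (Suc j) then show ?thesis using uniq_HG[OF assms, of j] uniq_HG[OF assms, of "Suc j"] HG_Suc[of H t j]
      by (simp add: solF_def eq_diff_eq del: sol.simps)
  qed
qed

lemma solF_HG: "(solF t mu C * Gt t) $ k = sol t mu C k"
proof (induction k)
  case 0 then show ?case by (simp add: HG_0 solF_def)
next
  case (Suc k) then show ?case by (simp add: HG_Suc solF_def)
qed

lemma exist:
  assumes "mu \<notin> Lam"
  shows "fps_const mu * solF t mu C - Cf t (solF t mu C) = C"
proof (rule fps_ext)
  fix k show "(fps_const mu * solF t mu C - Cf t (solF t mu C)) $ k = C $ k"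
  proof (cases k)
    case 0
    have d: "mu - 1 \<noteq> 0" using notLam_ne1[OF assms] .
    have "(fps_const mu * solF t mu C - Cf t (solF t mu C)) $ 0 = mu * sol t mu C 0 - sol t mu C 0"
      by (simp only: coeff_Lm solF_HG) (simp add: solF_def del: sol.simps)
    also have "\<dots> = (mu - 1) * (C $ 0 / (mu - 1))" by (simp only: sol.simps left_diff_distrib mult_1)
    also have "\<dots> = C $ 0" using d by simp
    finally show ?thesis using 0 by simp
  next
    case (Suc j)
    have d: "mu - 1 / of_nat (Suc (Suc j)) \<noteq> 0" using notLam_ne[OF assms] by blast
    have "(fps_const mu * solF t mu C - Cf t (solF t mu C)) $ Suc j
        = mu * (sol t mu C (Suc j) - of_real t * sol t mu C j) - sol t mu C (Suc j) / of_nat (Suc (Suc j))"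
      by (simp only: coeff_Lm solF_HG) (simp add: solF_def del: sol.simps)
    also have "\<dots> = sol t mu C (Suc j) * (mu - 1 / of_nat (Suc (Suc j))) - mu * of_real t * sol t mu C j"
      by (simp add: algebra_simps del: sol.simps)
    also have "\<dots> = C $ Suc j"
      using d by (simp del: of_nat_Suc)
    finally show ?thesis using Suc by simp
  qed
qed

lemma sol_add: "sol t mu (A + B) k = sol t mu A k + sol t mu B k"
  by (induction k) (simp_all add: add_divide_distrib[symmetric] algebra_simps)

lemma sol_cmult: "sol t mu (fps_const c * A) k = c * sol t mu A k"
  by (induction k) (simp_all add: algebra_simps times_divide_eq_right)

lemma solF_add: "solF t mu (A + B) = solF t mu A + solF t mu B"
  by (rule fps_ext) (simp add: solF_def sol_add algebra_simps del: sol.simps split: nat.split)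

lemma solF_cmult: "solF t mu (fps_const c * A) = fps_const c * solF t mu A"
  by (rule fps_ext) (simp add: solF_def sol_cmult del: sol.simps split: nat.split, simp add: algebra_simps del: sol.simps)

lemma sol_zero: "sol t mu 0 k = 0"
  by (induction k) simp_all

lemma solF_zero: "solF t mu 0 = 0"
  by (rule fps_ext) (simp add: solF_def sol_zero split: nat.split)



lemma fps_bound:
  fixes F :: "complex fps"
  assumes A: "0 \<le> A" and rho: "0 < \<rho>" and cf: "\<And>k. norm (F $ k) \<le> A * real (Suc k) / \<rho> ^ k"
    and r: "0 \<le> r" "r < \<rho>" and z: "norm z \<le> r"
  shows "summable (\<lambda>k. norm (F $ k * z ^ k))" "norm (eval_fps F z) \<le> A / (1 - r / \<rho>) ^ 2"
proof -
  define x where "x = r / \<rho>"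
  have x: "0 \<le> x" "x < 1" using r rho by (auto simp: x_def)
  have gs: "(\<lambda>n. real (Suc n) * x ^ n) sums (1 / (1 - x)^2)"
    using geometric_deriv_sums[of x] x by simp
  then have gs2: "(\<lambda>n. A * (real (Suc n) * x ^ n)) sums (A * (1 / (1 - x)^2))"
    by (rule sums_mult)
  have le: "norm (F $ k * z ^ k) \<le> A * (real (Suc k) * x ^ k)" for k
  proof -
    have "norm (F $ k * z ^ k) = norm (F $ k) * norm z ^ k" by (simp add: norm_mult norm_power)
    also have "\<dots> \<le> (A * real (Suc k) / \<rho> ^ k) * r ^ k"
      by (intro mult_mono cf power_mono z) (use A rho in auto)
    also have "\<dots> = A * (real (Suc k) * x ^ k)"
      by (simp add: x_def power_divide)
    finally show ?thesis .
  qed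
  show sm: "summable (\<lambda>k. norm (F $ k * z ^ k))"
    by (rule summable_comparison_test'[OF sums_summable[OF gs2]]) (use le in auto)
  have "norm (eval_fps F z) \<le> (\<Sum>k. norm (F $ k * z ^ k))"
    unfolding eval_fps_def by (rule summable_norm[OF sm])
  also have "\<dots> \<le> (\<Sum>k. A * (real (Suc k) * x ^ k))"
    by (rule suminf_le[OF le sm sums_summable[OF gs2]])
  also have "\<dots> = A / (1 - r / \<rho>) ^ 2"
    using sums_unique[OF gs2] by (simp add: x_def)
  finally show "norm (eval_fps F z) \<le> A / (1 - r / \<rho>) ^ 2" .
qed

lemma radius_from_bound:
  fixes F :: "complex fps"
  assumes "\<And>\<rho>. 0 < \<rho> \<Longrightarrow> \<rho> < 1 \<Longrightarrow> \<exists>A\<ge>0. \<forall>k. norm (F $ k) \<le> A * real (Suc k) / \<rho> ^ k"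
  shows "fps_conv_radius F \<ge> 1"
  unfolding fps_conv_radius_def
proof (rule conv_radius_geI_ex')
  fix r :: real assume r: "0 < r" "ereal r < 1"
  define \<rho> where "\<rho> = (1 + r) / 2"
  have r1: "r < 1" using r by simp
  have rho: "0 < \<rho>" "\<rho> < 1" "r < \<rho>" using r r1 by (auto simp: \<rho>_def)
  obtain A where A: "A \<ge> 0" "\<forall>k. norm (F $ k) \<le> A * real (Suc k) / \<rho> ^ k"
    using assms[OF rho(1,2)] by blast
  have "summable (\<lambda>k. norm (F $ k * complex_of_real r ^ k))"
    by (rule fps_bound(1)[OF A(1) rho(1) _ _ rho(3)]) (use A r in auto)
  then show "summable (\<lambda>n. fps_nth F n * of_real r ^ n)"
    by (rule summable_norm_cancel)
qed

definition supn :: "(complex \<Rightarrow> complex) \<Rightarrow> real \<Rightarrow> real" where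
  "supn g \<rho> = (SUP w\<in>cball 0 \<rho>. norm (g w))"

lemma supn_upper:
  assumes "g \<in> HD" "\<rho> < 1" "w \<in> cball 0 \<rho>"
  shows "norm (g w) \<le> supn g \<rho>"
proof -
  have sub: "cball 0 \<rho> \<subseteq> ball (0::complex) 1" using assms(2) by auto
  have h1: "g holomorphic_on ball 0 1" using assms(1) by (simp add: HD_def)
  have "continuous_on (cball 0 \<rho>) g"
    by (rule holomorphic_on_imp_continuous_on[OF holomorphic_on_subset[OF h1 sub]])
  then have "continuous_on (cball 0 \<rho>) (\<lambda>w. norm (g w))"
    by (intro continuous_intros)
  then have "bdd_above ((\<lambda>w. norm (g w)) ` cball 0 \<rho>)"
    by (intro bounded_imp_bdd_above compact_imp_bounded compact_continuous_image) auto
  then show ?thesis unfolding supn_def by (rule cSUP_upper[OF assms(3)])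
qed

lemma tay_coeff_bound:
  assumes "g \<in> HD" "0 < \<rho>" "\<rho> < 1"
  shows "norm (tay g $ k) \<le> supn g \<rho> / \<rho> ^ k"
proof -
  have sub: "cball 0 \<rho> \<subseteq> ball (0::complex) 1" using assms(3) by auto
  have h1: "g holomorphic_on ball 0 1" using assms(1) by (simp add: HD_def)
  have hol: "g holomorphic_on ball 0 \<rho>"
    by (rule holomorphic_on_subset[OF h1]) (use assms(3) in auto)
  have cont: "continuous_on (cball 0 \<rho>) g"
    by (rule holomorphic_on_imp_continuous_on[OF holomorphic_on_subset[OF h1 sub]])
  have "norm ((deriv ^^ k) g 0) \<le> fact k * supn g \<rho> / \<rho> ^ k"
    by (rule Cauchy_inequality[OF hol cont assms(2)]) (use supn_upper[OF assms(1,3)] in auto)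
  then show ?thesis
    by (simp add: tay_def norm_divide field_simps)
qed

lemma supn_nonneg:
  assumes "g \<in> HD" "0 \<le> \<rho>" "\<rho> < 1"
  shows "0 \<le> supn g \<rho>"
proof -
  have "norm (g 0) \<le> supn g \<rho>" using supn_upper[OF assms(1,3), of 0] assms(2) by simp
  then show ?thesis by (rule order_trans[OF norm_ge_zero])
qed

lemma equi_lemma:
  assumes hd: "\<And>T g. T \<in> \<T> \<Longrightarrow> g \<in> HD \<Longrightarrow> T g \<in> HD"
    and bd: "\<And>\<rho>. 0 < \<rho> \<Longrightarrow> \<rho> < 1 \<Longrightarrow>
       \<exists>A\<ge>0. \<forall>T\<in>\<T>. \<forall>g\<in>HD. \<forall>k. norm (tay (T g) $ k) \<le> A * supn g \<rho> * real (Suc k) / \<rho> ^ k"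
  shows "equicont_ops \<T>"
  unfolding equicont_ops_def
proof (intro allI impI)
  fix K :: "complex set" assume K: "compact K \<and> K \<subseteq> ball 0 1"
  obtain r where r: "0 \<le> r" "r < 1" "\<And>z. z \<in> K \<Longrightarrow> norm z \<le> r"
  proof (cases "K = {}")
    case True then show ?thesis using that[of 0] by auto
  next
    case False
    obtain x where x: "x \<in> K" "\<And>y. y \<in> K \<Longrightarrow> norm y \<le> norm x"
      using compact_attains_sup[of "norm ` K"] K False
      by (metis compact_continuous_image continuous_on_norm_id empty_is_image imageE image_eqI)
    show ?thesis using that[of "norm x"] x K by auto
  qed
  define \<rho> where "\<rho> = (1 + r) / 2"
  have rho: "0 < \<rho>" "\<rho> < 1" "r < \<rho>" using r by (auto simp: \<rho>_def)
  obtain A where A: "A \<ge> 0" "\<And>T g k. T\<in>\<T> \<Longrightarrow> g\<in>HD \<Longrightarrow> norm (tay (T g) $ k) \<le> A * supn g \<rho> * real (Suc k) / \<rho> ^ k"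
    using bd[OF rho(1,2)] by blast
  show "\<exists>K' C. compact K' \<and> K' \<noteq> {} \<and> K' \<subseteq> ball 0 1 \<and>
        (\<forall>T\<in>\<T>. \<forall>f\<in>HD. \<forall>z\<in>K. norm (T f z) \<le> C * (SUP w\<in>K'. norm (f w)))"
  proof (intro exI conjI ballI)
    show "compact (cball (0::complex) \<rho>)" by simp
    show "cball (0::complex) \<rho> \<noteq> {}" using rho by simp
    show "cball (0::complex) \<rho> \<subseteq> ball 0 1" using rho by auto
    fix T f z assume T: "T \<in> \<T>" and f: "f \<in> HD" and z: "z \<in> K"
    have zb: "z \<in> ball 0 1" using K z by auto
    have "T f z = eval_fps (tay (T f)) z" using tay_eval[OF hd[OF T f] zb] by simp
    also have "norm \<dots> \<le> (A * supn f \<rho>) / (1 - r / \<rho>) ^ 2"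
      by (rule fps_bound(2)[OF _ rho(1) _ r(1) rho(3) r(3)[OF z]])
         (use A(1) supn_nonneg[OF f _ rho(2)] rho A(2)[OF T f] in auto)
    finally show "norm (T f z) \<le> (A / (1 - r / \<rho>) ^ 2) * (SUP w\<in>cball 0 \<rho>. norm (f w))"
      by (simp add: supn_def)
  qed
qed



definition good :: "real \<Rightarrow> complex \<Rightarrow> real \<Rightarrow> real \<Rightarrow> bool" where
  "good t mu D \<rho> \<longleftrightarrow> (\<forall>C M. (\<forall>k. norm (C $ k) \<le> M / \<rho> ^ k) \<longrightarrow>
      (\<forall>k. norm (sol t mu C k) \<le> D * M * real (Suc k) / \<rho> ^ k))"

lemma solF_bound:
  assumes g: "good t mu D \<rho>" and D: "0 \<le> D" and t: "0 \<le> t" "t \<le> 1" and rho: "0 < \<rho>" "\<rho> \<le> 1"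
    and C: "\<forall>k. norm (C $ k) \<le> M / \<rho> ^ k"
  shows "norm (solF t mu C $ k) \<le> (2 * D * M) * real (Suc k) / \<rho> ^ k"
proof -
  have sb: "\<And>k. norm (sol t mu C k) \<le> D * M * real (Suc k) / \<rho> ^ k"
    using g C unfolding good_def by blast
  have M: "0 \<le> M" using C[rule_format, of 0] by (simp add: order_trans[OF norm_ge_zero])
  have DM: "0 \<le> D * M" using D M by simp
  show ?thesis
  proof (cases k)
    case 0
    then show ?thesis using sb[of 0] DM by (simp add: solF_def)
  next
    case (Suc j)
    have "norm (solF t mu C $ k) = norm (sol t mu C (Suc j) - of_real t * sol t mu C j)"
      using Suc by (simp add: solF_def del: sol.simps)
    also have "\<dots> \<le> norm (sol t mu C (Suc j)) + t * norm (sol t mu C j)"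
      using norm_triangle_ineq4[of "sol t mu C (Suc j)" "of_real t * sol t mu C j"] t
      by (simp add: norm_mult abs_of_nonneg del: sol.simps)
    also have "\<dots> \<le> D * M * real (Suc (Suc j)) / \<rho> ^ Suc j + t * (D * M * real (Suc j) / \<rho> ^ j)"
      using sb[of "Suc j"] sb[of j] t by (intro add_mono mult_left_mono) auto
    also have "t * (D * M * real (Suc j) / \<rho> ^ j) \<le> D * M * real (Suc (Suc j)) / \<rho> ^ Suc j"
    proof -
      have "t * (D * M * real (Suc j) / \<rho> ^ j) = (t * (D * M * real (Suc j))) / \<rho> ^ j" by simp
      also have "\<dots> \<le> (D * M * real (Suc (Suc j))) / \<rho> ^ Suc j"
      proof (rule frac_le)
        show "0 \<le> D * M * real (Suc (Suc j))" using DM by simp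
        have "t * (D * M * real (Suc j)) \<le> 1 * (D * M * real (Suc j))"
          using t DM by (intro mult_right_mono) auto
        also have "\<dots> \<le> D * M * real (Suc (Suc j))"
          using mult_left_mono[OF _ DM, of "real (Suc j)" "real (Suc (Suc j))"] by simp
        finally show "t * (D * M * real (Suc j)) \<le> D * M * real (Suc (Suc j))" by simp
        show "0 < \<rho> ^ Suc j" using rho by simp
        show "\<rho> ^ Suc j \<le> \<rho> ^ j" using rho by (simp add: power_decreasing)
      qed
      finally show ?thesis .
    qed
    finally show ?thesis using Suc by simp
  qed
qed

lemma sol_zero_mu: "sol t 0 C k = - of_nat (Suc k) * C $ k"
  by (cases k) (simp_all add: field_simps del: of_nat_Suc)

lemma good_zero: "0 < \<rho> \<Longrightarrow> good t 0 1 \<rho>"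
  unfolding good_def
proof (intro allI impI)
  fix C :: "complex fps" and M k assume "0 < \<rho>" "\<forall>k. norm (C $ k) \<le> M / \<rho> ^ k"
  then have "real (Suc k) * norm (C $ k) \<le> real (Suc k) * (M / \<rho> ^ k)"
    by (intro mult_left_mono) auto
  then show "norm (sol t 0 C k) \<le> 1 * M * real (Suc k) / \<rho> ^ k"
    by (simp only: sol_zero_mu norm_mult norm_minus_cancel norm_of_nat) (simp add: mult.commute)
qed

lemma inv_tay:
  assumes t: "0 \<le> t" "t < 1" and mu: "mu \<notin> Lam" and S: "is_inverse_of (Ct t) mu S" and g: "g \<in> HD"
  shows "S g \<in> HD" "tay (S g) = solF t mu (tay g)"
proof -
  show h: "S g \<in> HD" using S g by (simp add: is_inverse_of_def)
  have eq: "\<And>z. z \<in> ball 0 1 \<Longrightarrow> mu * S g z - Ct t (S g) z = g z"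
    using S g by (simp add: is_inverse_of_def)
  have "tay (\<lambda>w. mu * S g w - Ct t (S g) w) = tay g"
    by (rule tay_unique[OF tay_radius[OF g]]) (use eq tay_eval[OF g] in auto)
  then have "fps_const mu * tay (S g) - Cf t (tay (S g)) = tay g"
    using tay_Lm[OF h t] by simp
  then show "tay (S g) = solF t mu (tay g)" by (rule uniq[OF mu])
qed

lemma resolvent_mem:
  assumes t: "0 \<le> t" "t < 1" and mu: "mu \<notin> Lam"
    and gd: "\<And>\<rho>. 0 < \<rho> \<Longrightarrow> \<rho> < 1 \<Longrightarrow> \<exists>D\<ge>0. good t mu D \<rho>"
  shows "mu \<in> resolvent_set (Ct t)"
proof -
  define S where "S = (\<lambda>g. eval_fps (solF t mu (tay g)))"
  have cb: "\<exists>A\<ge>0. \<forall>k. norm (solF t mu (tay g) $ k) \<le> A * supn g \<rho> * real (Suc k) / \<rho> ^ k"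
    if g: "g \<in> HD" and rho: "0 < \<rho>" "\<rho> < 1" for g \<rho>
  proof -
    obtain D where D: "D \<ge> 0" "good t mu D \<rho>" using gd[OF rho] by blast
    show ?thesis
      by (rule exI[of _ "2 * D"]) (use D solF_bound[OF D(2) D(1) t(1) _ rho(1) _ allI[OF tay_coeff_bound[OF g rho]]] t rho in auto)
  qed
  have rad: "fps_conv_radius (solF t mu (tay g)) \<ge> 1" if g: "g \<in> HD" for g
  proof (rule radius_from_bound)
    fix \<rho> :: real assume rho: "0 < \<rho>" "\<rho> < 1"
    obtain A where A: "A \<ge> 0" "\<forall>k. norm (solF t mu (tay g) $ k) \<le> A * supn g \<rho> * real (Suc k) / \<rho> ^ k"
      using cb[OF g rho] by blast
    show "\<exists>A\<ge>0. \<forall>k. norm (solF t mu (tay g) $ k) \<le> A * real (Suc k) / \<rho> ^ k"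
      by (rule exI[of _ "A * supn g \<rho>"]) (use A supn_nonneg[OF g _ rho(2)] rho in auto)
  qed
  have SHD: "S g \<in> HD" if g: "g \<in> HD" for g
    unfolding S_def HD_def by (simp add: holomorphic_on_eval_fps ball_eball1 rad[OF g])
  have tS: "tay (S g) = solF t mu (tay g)" if g: "g \<in> HD" for g
    by (rule tay_unique[OF rad[OF g]]) (simp add: S_def)
  have lin: "lin_op S"
    unfolding lin_op_def
  proof (intro conjI ballI allI)
    fix f assume "f \<in> HD" then show "S f \<in> HD" by (rule SHD)
  next
    fix f g z assume f: "f \<in> HD" and g: "g \<in> HD" and z: "z \<in> ball (0::complex) 1"
    show "S (\<lambda>w. f w + g w) z = S f z + S g z"
      unfolding S_def tay_add[OF f g] solF_add by (rule eval_add1[OF rad[OF f] rad[OF g] z])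
  next
    fix f c z assume f: "f \<in> HD" and z: "z \<in> ball (0::complex) 1"
    show "S (\<lambda>w. c * f w) z = c * S f z"
      unfolding S_def tay_cmult[OF f] solF_cmult by (rule eval_const_mult[OF rad[OF f] z])
  qed
  have equi: "equicont_ops {S}"
  proof (rule equi_lemma)
    fix T g assume "T \<in> {S}" "g \<in> HD" then show "T g \<in> HD" using SHD by auto
  next
    fix \<rho> :: real assume rho: "0 < \<rho>" "\<rho> < 1"
    obtain D where D: "D \<ge> 0" "good t mu D \<rho>" using gd[OF rho] by blast
    show "\<exists>A\<ge>0. \<forall>T\<in>{S}. \<forall>g\<in>HD. \<forall>k. norm (tay (T g) $ k) \<le> A * supn g \<rho> * real (Suc k) / \<rho> ^ k"
      by (rule exI[of _ "2 * D"]) (use D solF_bound[OF D(2) D(1) t(1) _ rho(1) _ allI[OF tay_coeff_bound[OF _ rho]]] t rho tS in auto)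
  qed
  have inv: "is_inverse_of (Ct t) mu S"
    unfolding is_inverse_of_def
  proof (intro conjI ballI)
    fix g assume "g \<in> HD" then show "S g \<in> HD" by (rule SHD)
  next
    fix g z assume g: "g \<in> HD" and z: "z \<in> ball (0::complex) 1"
    define F where "F = solF t mu (tay g)"
    have rF: "fps_conv_radius F \<ge> 1" using rad[OF g] by (simp add: F_def)
    have "Ct t (S g) z = eval_fps (Cf t F) z"
      using Ct_eval[OF SHD[OF g] t z] tS[OF g] by (simp add: F_def)
    moreover have "mu * S g z = eval_fps (fps_const mu * F) z"
      using eval_const_mult[OF rF z] by (simp add: S_def F_def)
    ultimately have "mu * S g z - Ct t (S g) z = eval_fps (fps_const mu * F - Cf t F) z"
      using eval_diff1[OF radius_const_mult[OF rF] Cf_radius[OF rF t] z] by simp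
    also have "\<dots> = eval_fps (tay g) z" unfolding F_def exist[OF mu] ..
    also have "\<dots> = g z" by (rule tay_eval[OF g z])
    finally show "mu * S g z - Ct t (S g) z = g z" .
  next
    fix f z assume f: "f \<in> HD" and z: "z \<in> ball (0::complex) 1"
    have "solF t mu (tay (\<lambda>w. mu * f w - Ct t f w)) = tay f"
      unfolding tay_Lm[OF f t] by (rule uniq[OF mu, symmetric]) simp
    then show "S (\<lambda>w. mu * f w - Ct t f w) z = f z"
      unfolding S_def using tay_eval[OF f z] by simp
  qed
  show ?thesis unfolding resolvent_set_def cont_lin_op_def using lin equi inv by blast
qed

lemma equi_inverses:
  assumes t: "0 \<le> t" "t < 1" and U: "\<And>mu. mu \<in> U \<Longrightarrow> mu \<notin> Lam"
    and gd: "\<And>\<rho>. 0 < \<rho> \<Longrightarrow> \<rho> < 1 \<Longrightarrow> \<exists>D\<ge>0. \<forall>mu\<in>U. good t mu D \<rho>"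
  shows "equicont_ops {S. \<exists>mu\<in>U. cont_lin_op S \<and> is_inverse_of (Ct t) mu S}"
proof (rule equi_lemma)
  fix T g assume "T \<in> {S. \<exists>mu\<in>U. cont_lin_op S \<and> is_inverse_of (Ct t) mu S}" "g \<in> HD"
  then show "T g \<in> HD" by (auto simp: is_inverse_of_def)
next
  fix \<rho> :: real assume rho: "0 < \<rho>" "\<rho> < 1"
  obtain D where D: "D \<ge> 0" "\<forall>mu\<in>U. good t mu D \<rho>" using gd[OF rho] by blast
  show "\<exists>A\<ge>0. \<forall>T\<in>{S. \<exists>mu\<in>U. cont_lin_op S \<and> is_inverse_of (Ct t) mu S}. \<forall>g\<in>HD. \<forall>k.
          norm (tay (T g) $ k) \<le> A * supn g \<rho> * real (Suc k) / \<rho> ^ k"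
  proof (intro exI[of _ "2 * D"] conjI ballI allI)
    show "0 \<le> 2 * D" using D by simp
    fix T g k assume T: "T \<in> {S. \<exists>mu\<in>U. cont_lin_op S \<and> is_inverse_of (Ct t) mu S}" and g: "g \<in> HD"
    then obtain mu where mu: "mu \<in> U" "is_inverse_of (Ct t) mu T" by blast
    have "tay (T g) = solF t mu (tay g)" by (rule inv_tay(2)[OF t U[OF mu(1)] mu(2) g])
    then show "norm (tay (T g) $ k) \<le> 2 * D * supn g \<rho> * real (Suc k) / \<rho> ^ k"
      using solF_bound[OF D(2)[rule_format, OF mu(1)] D(1) t(1) _ rho(1) _ allI[OF tay_coeff_bound[OF g rho]]] t rho
      by simp
  qed
qed



lemma sol_step:
  assumes t: "0 \<le> t" and d: "mu - 1 / of_nat (Suc (Suc k)) \<noteq> 0"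
  shows "norm (sol t mu C (Suc k)) * norm (mu - 1 / of_nat (Suc (Suc k)))
          \<le> norm (C $ Suc k) + norm mu * t * norm (sol t mu C k)"
proof -
  have "sol t mu C (Suc k) * (mu - 1 / of_nat (Suc (Suc k))) = C $ Suc k + mu * of_real t * sol t mu C k"
    using d by (simp del: of_nat_Suc)
  then have "norm (sol t mu C (Suc k)) * norm (mu - 1 / of_nat (Suc (Suc k))) = norm (C $ Suc k + mu * of_real t * sol t mu C k)"
    by (metis norm_mult)
  also have "\<dots> \<le> norm (C $ Suc k) + norm (mu * of_real t * sol t mu C k)" by (rule norm_triangle_ineq)
  also have "norm (mu * of_real t * sol t mu C k) = norm mu * t * norm (sol t mu C k)"
    using t by (simp add: norm_mult)
  finally show ?thesis .
qed

lemma sol_step0: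
  assumes d: "mu - 1 \<noteq> 0"
  shows "norm (sol t mu C 0) * norm (mu - 1) = norm (C $ 0)"
  using d by (simp add: norm_divide)

lemma good_uniform:
  assumes t: "0 \<le> t" "t < 1" and m: "0 < m" and e: "0 < \<epsilon>" and rho: "0 < \<rho>" "\<rho> \<le> 1"
  shows "\<exists>D\<ge>0. \<forall>mu::complex. (\<forall>k. \<epsilon> \<le> norm (mu - 1 / of_nat (Suc k))) \<and> m \<le> norm mu \<and> norm mu \<le> L
            \<longrightarrow> good t mu D \<rho>"
proof -
  obtain k0 :: nat where k0: "2 / (m * (1 - t)) < real k0" using reals_Archimedean2 by blast
  define B where "B = max 1 ((1 + L * t) / \<epsilon>)"
  define D where "D = max (B ^ Suc k0) (2 / (m * (1 - t)))"
  have B1: "1 \<le> B" by (simp add: B_def)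
  have mt: "0 < m * (1 - t)" using m t by simp
  have "0 \<le> B ^ Suc k0" using B1 by simp
  then have D0: "0 \<le> D" unfolding D_def by (rule order_trans[OF _ max.cobounded1])
  show ?thesis
  proof (intro exI[of _ D] conjI allI impI)
    show "0 \<le> D" by (rule D0)
    fix mu :: complex assume H: "(\<forall>k. \<epsilon> \<le> norm (mu - 1 / of_nat (Suc k))) \<and> m \<le> norm mu \<and> norm mu \<le> L"
    have den: "\<And>k. \<epsilon> \<le> norm (mu - 1 / of_nat (Suc k))" using H by blast
    have mmu: "m \<le> norm mu" and muL: "norm mu \<le> L" using H by auto
    have L0: "0 \<le> L" using muL norm_ge_zero order_trans by blast
    have Be: "1 + L * t \<le> B * \<epsilon>"
      using e by (simp add: B_def pos_divide_le_eq[symmetric])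
    show "good t mu D \<rho>"
      unfolding good_def
    proof (rule allI, rule allI, rule impI)
      fix C :: "complex fps" and M :: real
      assume hC0: "\<forall>k. norm (C $ k) \<le> M / \<rho> ^ k"
      define u where "u k = norm (sol t mu C k) * \<rho> ^ k" for k
      have hC: "norm (C $ k) * \<rho> ^ k \<le> M" for k
        using hC0 rho by (simp add: pos_le_divide_eq)
      have M0: "0 \<le> M"
      proof -
        have "norm (C $ 0) \<le> M" using hC[of 0] by simp
        then show ?thesis by (rule order_trans[OF norm_ge_zero])
      qed
      have u0: "0 \<le> u k" for k using rho by (simp add: u_def)
      have step: "u (Suc k) * norm (mu - 1 / of_nat (Suc (Suc k))) \<le> M + norm mu * t * u k" for k
      proof -
        have dn: "mu - 1 / of_nat (Suc (Suc k)) \<noteq> 0" using den[of "Suc k"] e by auto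
        have "u (Suc k) * norm (mu - 1 / of_nat (Suc (Suc k)))
             = \<rho> ^ Suc k * (norm (sol t mu C (Suc k)) * norm (mu - 1 / of_nat (Suc (Suc k))))"
          by (simp add: u_def algebra_simps)
        also have "\<dots> \<le> \<rho> ^ Suc k * (norm (C $ Suc k) + norm mu * t * norm (sol t mu C k))"
          by (rule mult_left_mono[OF sol_step[OF t(1) dn]]) (use rho in simp)
        also have "\<dots> = norm (C $ Suc k) * \<rho> ^ Suc k + (norm mu * t * \<rho>) * u k"
          by (simp add: u_def algebra_simps)
        also have "\<dots> \<le> M + norm mu * t * u k"
        proof (rule add_mono[OF hC])
          have "norm mu * t * \<rho> \<le> norm mu * t * 1"
            using rho t by (intro mult_left_mono) auto
          then show "norm mu * t * \<rho> * u k \<le> norm mu * t * u k"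
            using u0[of k] by (simp add: mult_right_mono)
        qed
        finally show ?thesis .
      qed
      have ph1: "u k \<le> M * B ^ Suc k" for k
      proof (induction k)
        case 0
        have d1: "mu - 1 \<noteq> 0" using den[of 0] e by auto
        have "u 0 * \<epsilon> \<le> u 0 * norm (mu - 1)"
          using den[of 0] u0[of 0] by (simp add: mult_left_mono)
        also have "\<dots> = norm (C $ 0)" using sol_step0[OF d1] by (simp add: u_def)
        also have "\<dots> \<le> M" using hC[of 0] by simp
        also have "M \<le> M * B * \<epsilon>"
        proof -
          have "0 \<le> L * t" using L0 t by simp
          then have "1 \<le> B * \<epsilon>" using Be by linarith
          from mult_left_mono[OF this M0] show ?thesis by (simp add: mult.assoc)
        qed
        finally have "u 0 * \<epsilon> \<le> (M * B) * \<epsilon>" by simp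
        then show ?case using e by simp
      next
        case (Suc k)
        have "u (Suc k) * \<epsilon> \<le> u (Suc k) * norm (mu - 1 / of_nat (Suc (Suc k)))"
          using den[of "Suc k"] u0[of "Suc k"] by (simp add: mult_left_mono)
        also have "\<dots> \<le> M + norm mu * t * u k" by (rule step)
        also have "\<dots> \<le> M * B ^ Suc k + L * t * (M * B ^ Suc k)"
        proof (rule add_mono)
          show "M \<le> M * B ^ Suc k" using mult_left_mono[OF one_le_power[OF B1, of "Suc k"] M0] by simp
          show "norm mu * t * u k \<le> L * t * (M * B ^ Suc k)"
            using muL t u0[of k] Suc.IH L0 by (intro mult_mono) auto
        qed
        also have "\<dots> = (M * B ^ Suc k) * (1 + L * t)" by (simp add: algebra_simps)
        also have "\<dots> \<le> (M * B ^ Suc k) * (B * \<epsilon>)"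
          using Be M0 B1 by (intro mult_left_mono) auto
        finally have "u (Suc k) * \<epsilon> \<le> (M * B ^ Suc (Suc k)) * \<epsilon>" by (simp add: algebra_simps)
        then show ?case using e by simp
      qed
      have ph2: "u k \<le> D * M" for k
      proof (induction k)
        case 0
        have "u 0 \<le> M * B ^ Suc 0" by (rule ph1)
        also have "\<dots> \<le> M * B ^ Suc k0" using M0 B1 by (intro mult_left_mono power_increasing) auto
        also have "\<dots> \<le> D * M" using M0 by (simp add: D_def mult.commute mult_left_mono)
        finally show ?case .
      next
        case (Suc k)
        show ?case
        proof (cases "Suc k \<le> k0")
          case True
          have "u (Suc k) \<le> M * B ^ Suc (Suc k)" by (rule ph1)
          also have "\<dots> \<le> M * B ^ Suc k0" by (rule mult_left_mono[OF power_increasing M0]) (use True B1 in auto)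
          also have "\<dots> \<le> D * M" using M0 by (simp add: D_def mult.commute mult_left_mono)
          finally show ?thesis .
        next
          case False
          define dn where "dn = norm (mu - 1 / of_nat (Suc (Suc k)) :: complex)"
          have kk: "real k0 < real (Suc (Suc k))" using False by simp
          have inv: "1 / real (Suc (Suc k)) < m * (1 - t) / 2"
          proof -
            have "2 / (m * (1 - t)) < real (Suc (Suc k))" using k0 kk by linarith
            then show ?thesis using mt by (simp add: field_simps)
          qed
          have "norm mu - 1 / real (Suc (Suc k)) \<le> dn"
            using norm_triangle_ineq2[of mu "1 / of_nat (Suc (Suc k))"]
            by (simp add: dn_def norm_divide del: of_nat_Suc)
          then have dn1: "norm mu - m * (1 - t) / 2 \<le> dn" using inv by linarith
          have Dm: "1 \<le> D * (m * (1 - t) / 2)"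
          proof -
            have "2 / (m * (1 - t)) \<le> D" by (simp add: D_def)
            then show ?thesis using mt by (simp add: field_simps)
          qed
          have "M + norm mu * t * (D * M) \<le> D * M * (norm mu - m * (1 - t) / 2)"
          proof -
            have "M \<le> M * (D * (m * (1 - t) / 2))" using mult_left_mono[OF Dm M0] by simp
            moreover have "D * M * (m * (1 - t) / 2) \<le> D * M * (norm mu * (1 - t) - m * (1 - t) / 2)"
            proof (rule mult_left_mono)
              have "m * (1 - t) \<le> norm mu * (1 - t)" using mmu t by (intro mult_right_mono) auto
              then show "m * (1 - t) / 2 \<le> norm mu * (1 - t) - m * (1 - t) / 2" by simp
              show "0 \<le> D * M" using D0 M0 by simp
            qed
            moreover have "M * (D * (m * (1 - t) / 2)) = D * M * (m * (1 - t) / 2)" by (simp add: algebra_simps)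
            moreover have "D * M * (norm mu * (1 - t) - m * (1 - t) / 2) + norm mu * t * (D * M) = D * M * (norm mu - m * (1 - t) / 2)"
              by (simp add: algebra_simps)
            ultimately show ?thesis by linarith
          qed
          also have "\<dots> \<le> D * M * dn" using dn1 D0 M0 by (intro mult_left_mono) auto
          finally have a: "M + norm mu * t * (D * M) \<le> D * M * dn" .
          have "u (Suc k) * dn \<le> M + norm mu * t * u k" using step[of k] by (simp add: dn_def)
          also have "\<dots> \<le> M + norm mu * t * (D * M)"
            using Suc.IH t by (intro add_left_mono mult_left_mono) auto
          also have "\<dots> \<le> (D * M) * dn" using a by simp
          finally have b: "u (Suc k) * dn \<le> (D * M) * dn" .
          have "0 < dn"
          proof -
            have "m * (1 - t) \<le> m * 1" using m t by (intro mult_left_mono) auto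
            then have "m * (1 - t) / 2 < norm mu" using mmu m by linarith
            then show ?thesis using dn1 by linarith
          qed
          then show ?thesis using b by simp
        qed
      qed
      show "\<forall>k. norm (sol t mu C k) \<le> D * M * real (Suc k) / \<rho> ^ k"
      proof
        fix k
        have "norm (sol t mu C k) * \<rho> ^ k \<le> D * M * 1" using ph2[of k] by (simp add: u_def)
        also have "\<dots> \<le> D * M * real (Suc k)" using D0 M0 by (intro mult_left_mono) auto
        finally show "norm (sol t mu C k) \<le> D * M * real (Suc k) / \<rho> ^ k"
          using rho by (simp add: pos_le_divide_eq)
      qed
    qed
  qed
qed



lemma one_minus_tz_ne:
  assumes "0 \<le> t" "t < 1" "z \<in> ball 0 1"
  shows "1 - complex_of_real t * z \<noteq> 0"
proof -
  have "t * norm z \<le> 1 * norm z" using assms by (intro mult_right_mono) auto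
  moreover have "norm (complex_of_real t * z) = t * norm z"
    using assms by (simp add: norm_mult abs_of_nonneg)
  ultimately have "norm (complex_of_real t * z) < 1" using assms by simp
  then show ?thesis by auto
qed

lemma ptspec_sub_spec:
  assumes t: "0 \<le> t" "t < 1"
  shows "point_spectrum_H (Ct t) \<subseteq> spectrum_H (Ct t)"
proof
  fix lam assume "lam \<in> point_spectrum_H (Ct t)"
  then have "\<exists>f\<in>HD. (\<exists>z\<in>ball 0 1. f z \<noteq> 0) \<and> (\<forall>z\<in>ball 0 1. lam * f z - Ct t f z = 0)"
    by (simp add: point_spectrum_H_def)
  then obtain f where f: "f \<in> HD" and ex: "\<exists>z\<in>ball 0 1. f z \<noteq> 0"
    and ev: "\<forall>z\<in>ball 0 1. lam * f z - Ct t f z = 0" by blast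
  from ex obtain z0 where z0: "z0 \<in> ball 0 1" "f z0 \<noteq> 0" by (elim bexE)
  show "lam \<in> spectrum_H (Ct t)"
  proof (rule ccontr)
    assume "lam \<notin> spectrum_H (Ct t)"
    then have "\<exists>S. cont_lin_op S \<and> is_inverse_of (Ct t) lam S"
      by (simp add: spectrum_H_def resolvent_set_def)
    then obtain S where S1: "cont_lin_op S" and S2: "is_inverse_of (Ct t) lam S" by (elim exE conjE)
    define h where "h = (\<lambda>w. lam * f w - Ct t f w)"
    have hHD: "h \<in> HD"
    proof -
      have "f holomorphic_on ball 0 1" "Ct t f holomorphic_on ball 0 1"
        using f Ct_HD[OF f t] by (simp_all add: HD_def)
      then have "(\<lambda>w. lam * f w - Ct t f w) holomorphic_on ball 0 1"
        by (intro holomorphic_on_diff holomorphic_on_mult holomorphic_on_const) auto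
      then show ?thesis by (simp add: HD_def h_def)
    qed
    have Shz: "S h z0 = f z0"
      using S2 f z0(1) unfolding is_inverse_of_def h_def by blast
    have eq: "equicont_ops {S}" using S1 by (simp add: cont_lin_op_def)
    have cz: "compact {z0} \<and> {z0} \<subseteq> ball 0 1" using z0 by simp
    have "\<exists>K' C. compact K' \<and> K' \<noteq> {} \<and> K' \<subseteq> ball 0 1 \<and>
        (\<forall>T\<in>{S}. \<forall>f\<in>HD. \<forall>z\<in>{z0}. norm (T f z) \<le> C * (SUP w\<in>K'. norm (f w)))"
      using eq cz unfolding equicont_ops_def by (elim allE impE) 
    then obtain K' C where K': "compact K'" "K' \<noteq> {}" "K' \<subseteq> ball 0 1"
      and bd0: "\<forall>T\<in>{S}. \<forall>f\<in>HD. \<forall>z\<in>{z0}. norm (T f z) \<le> C * (SUP w\<in>K'. norm (f w))"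
      by (elim exE conjE)
    have bd: "norm (S h z0) \<le> C * (SUP w\<in>K'. norm (h w))" using bd0 hHD by simp
    have "(SUP w\<in>K'. norm (h w)) = (SUP w\<in>K'. (0::real))"
    proof (rule SUP_cong)
      fix w assume "w \<in> K'"
      then have "w \<in> ball 0 1" using K'(3) by blast
      then show "norm (h w) = 0" using ev by (simp add: h_def)
    qed simp
    also have "\<dots> = 0" using K'(2) by simp
    finally have "norm (S h z0) \<le> 0" using bd by simp
    then show False using Shz z0 by simp
  qed
qed

definition ef :: "real \<Rightarrow> nat \<Rightarrow> complex \<Rightarrow> complex" where
  "ef t n w = w ^ n / (1 - complex_of_real t * w) ^ (n + 1)"

lemma ef_HD:
  assumes "0 \<le> t" "t < 1" shows "ef t n \<in> HD"
proof -
  have "(\<lambda>w. w ^ n / (1 - complex_of_real t * w) ^ (n + 1)) holomorphic_on ball 0 1"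
    by (rule holomorphic_on_divide[OF holomorphic_on_power[OF holomorphic_on_ident]
          holomorphic_on_power[OF holomorphic_on_diff[OF holomorphic_on_const holomorphic_on_mult[OF holomorphic_on_const holomorphic_on_ident]]]])
       (use one_minus_tz_ne[OF assms] in simp)
  then show ?thesis unfolding HD_def ef_def by simp
qed

lemma ef_deriv:
  assumes t: "0 \<le> t" "t < 1" and w: "w \<in> ball 0 1"
  shows "((\<lambda>w. (1 / of_nat (n + 1)) * (w / (1 - complex_of_real t * w)) ^ (n + 1))
           has_field_derivative (ef t n w / (1 - complex_of_real t * w))) (at w within ball 0 1)"
proof -
  define g where "g = 1 - complex_of_real t * w"
  have d: "g \<noteq> 0" using one_minus_tz_ne[OF t w] by (simp add: g_def)
  have dq0: "((\<lambda>w. w / (1 - complex_of_real t * w)) has_field_derivative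
        ((1 * (1 - complex_of_real t * w) - w * (0 - complex_of_real t * 1)) / ((1 - complex_of_real t * w) * (1 - complex_of_real t * w)))) (at w)"
    by (rule DERIV_divide[OF DERIV_ident DERIV_diff[OF DERIV_const DERIV_cmult[OF DERIV_ident]]]) (use d in \<open>simp add: g_def\<close>)
  have dq: "((\<lambda>w. w / (1 - complex_of_real t * w)) has_field_derivative (1 / g ^ 2)) (at w)"
    by (rule DERIV_cong[OF dq0]) (simp add: g_def power2_eq_square)
  have dp: "((\<lambda>w. (w / (1 - complex_of_real t * w)) ^ (n + 1)) has_field_derivative
       (of_nat (n + 1) * (1 / g ^ 2) * (w / g) ^ (n + 1 - Suc 0))) (at w)"
    using DERIV_power[OF dq, of "n + 1"] by (simp add: g_def)
  have dc: "((\<lambda>w. (1 / of_nat (n + 1)) * (w / (1 - complex_of_real t * w)) ^ (n + 1)) has_field_derivative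
       ((1 / of_nat (n + 1)) * (of_nat (n + 1) * (1 / g ^ 2) * (w / g) ^ (n + 1 - Suc 0)))) (at w)"
    by (rule DERIV_cmult[OF dp])
  have "(1 / of_nat (n + 1)) * (of_nat (n + 1) * (1 / g ^ 2) * (w / g) ^ (n + 1 - Suc 0)) = ef t n w / g"
  proof -
    have nz: "(of_nat (n + 1) :: complex) \<noteq> 0" by (simp only: of_nat_eq_0_iff)
    have "(1 / of_nat (n + 1)) * (of_nat (n + 1) * (1 / g ^ 2) * (w / g) ^ (n + 1 - Suc 0)) = (1 / g ^ 2) * (w / g) ^ n"
      using nz by simp
    also have "\<dots> = w ^ n / (g ^ (n + 1) * g)" using d by (simp add: power_divide power2_eq_square field_simps)
    also have "\<dots> = ef t n w / g" by (simp add: ef_def g_def)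
    finally show ?thesis .
  qed
  with dc show ?thesis by (simp add: g_def has_field_derivative_at_within)
qed

lemma ef_Ct:
  assumes t: "0 \<le> t" "t < 1" and z: "z \<in> ball 0 1"
  shows "Ct t (ef t n) z = ef t n z / of_nat (n + 1)"
proof (cases "z = 0")
  case True
  then show ?thesis by (cases n) (simp_all add: Ct_def ef_def)
next
  case False
  define P where "P = (\<lambda>w. (1 / of_nat (n + 1)) * (w / (1 - complex_of_real t * w)) ^ (n + 1) :: complex)"
  have pi: "path_image (linepath 0 z) \<subseteq> ball 0 1"
    using z by (simp add: closed_segment_subset)
  have "((\<lambda>w. ef t n w / (1 - complex_of_real t * w)) has_contour_integral (P (pathfinish (linepath 0 z)) - P (pathstart (linepath 0 z)))) (linepath 0 z)"
    by (rule contour_integral_primitive[OF _ _ pi]) (use ef_deriv[OF t] in \<open>auto simp: P_def\<close>)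
  then have "contour_integral (linepath 0 z) (\<lambda>w. ef t n w / (1 - complex_of_real t * w)) = P z"
    by (simp add: contour_integral_unique P_def)
  then have "Ct t (ef t n) z = (1 / z) * P z" using False by (simp add: Ct_def)
  also have "\<dots> = ef t n z / of_nat (n + 1)"
    using False by (simp add: P_def ef_def power_divide field_simps)
  finally show ?thesis .
qed



lemma Lam_sub_pt:
  assumes t: "0 \<le> t" "t < 1"
  shows "Lam \<subseteq> point_spectrum_H (Ct t)"
proof
  fix lam assume "lam \<in> Lam"
  then obtain n where n: "lam = 1 / of_nat (n + 1)" unfolding Lam_def by blast
  have hz: "(1/2 :: complex) \<in> ball 0 1" by simp
  have "ef t n (1/2) \<noteq> 0"
    using one_minus_tz_ne[OF t hz] by (simp add: ef_def)
  moreover have "\<forall>z\<in>ball 0 1. lam * ef t n z - Ct t (ef t n) z = 0"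
    using ef_Ct[OF t] n by simp
  ultimately show "lam \<in> point_spectrum_H (Ct t)"
    unfolding point_spectrum_H_def using ef_HD[OF t] hz by blast
qed

lemma pt_sub_Lam:
  assumes t: "0 \<le> t" "t < 1"
  shows "point_spectrum_H (Ct t) \<subseteq> Lam"
proof
  fix lam assume "lam \<in> point_spectrum_H (Ct t)"
  then have "\<exists>f\<in>HD. (\<exists>z\<in>ball 0 1. f z \<noteq> 0) \<and> (\<forall>z\<in>ball 0 1. lam * f z - Ct t f z = 0)"
    by (simp add: point_spectrum_H_def)
  then obtain f z0 where f: "f \<in> HD" and z0: "z0 \<in> ball 0 1" "f z0 \<noteq> 0"
    and ev: "\<forall>z\<in>ball 0 1. lam * f z - Ct t f z = 0" by blast
  show "lam \<in> Lam"
  proof (rule ccontr)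
    assume nl: "lam \<notin> Lam"
    have "tay (\<lambda>w. lam * f w - Ct t f w) = 0"
      by (rule tay_unique) (use ev in auto)
    then have "fps_const lam * tay f - Cf t (tay f) = 0" using tay_Lm[OF f t] by simp
    then have "tay f = solF t lam 0" by (rule uniq[OF nl])
    then have "tay f = 0" by (simp add: solF_zero)
    then have "f z0 = 0" using tay_eval[OF f z0(1)] by simp
    then show False using z0 by simp
  qed
qed

lemma eps_exists:
  assumes nl: "lam \<notin> Lam" and nz: "lam \<noteq> 0"
  shows "\<exists>\<epsilon>>0. (\<forall>k. 2 * \<epsilon> \<le> norm (lam - 1 / of_nat (Suc k))) \<and> 2 * \<epsilon> \<le> norm lam"
proof -
  define a where "a = norm lam"
  have a: "0 < a" using nz by (simp add: a_def)
  obtain N :: nat where N: "2 / a < real N" using reals_Archimedean2 by blast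
  define S where "S = insert (a / 2) ((\<lambda>k. norm (lam - 1 / of_nat (Suc k))) ` {..<N})"
  have fS: "finite S" "S \<noteq> {}" by (auto simp: S_def)
  have pos: "\<forall>x\<in>S. 0 < x"
  proof
    fix x assume "x \<in> S"
    then consider "x = a / 2" | k where "x = norm (lam - 1 / of_nat (Suc k))" by (auto simp: S_def)
    then show "0 < x"
    proof cases
      case 1 then show ?thesis using a by simp
    next
      case (2 k)
      have "lam \<noteq> 1 / of_nat (k + 1)" using nl unfolding Lam_def by blast
      then show ?thesis using 2 by simp
    qed
  qed
  define e0 where "e0 = Min S"
  have e0: "0 < e0" using fS pos by (simp add: e0_def)
  have e0S: "\<And>x. x \<in> S \<Longrightarrow> e0 \<le> x" using fS by (simp add: e0_def)
  show ?thesis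
  proof (intro exI[of _ "e0 / 2"] conjI allI)
    show "0 < e0 / 2" using e0 by simp
    show "2 * (e0 / 2) \<le> norm lam" using e0S[of "a/2"] a e0 by (simp add: S_def a_def)
    fix k :: nat
    show "2 * (e0 / 2) \<le> norm (lam - 1 / of_nat (Suc k))"
    proof (cases "k < N")
      case True then show ?thesis using e0S[of "norm (lam - 1 / of_nat (Suc k))"] by (simp add: S_def)
    next
      case False
      have "2 / a < real (Suc k)" using N False by simp
      then have inv: "1 / real (Suc k) < a / 2" using a by (simp add: field_simps)
      have "norm lam - norm (1 / of_nat (Suc k) :: complex) \<le> norm (lam - 1 / of_nat (Suc k))"
        by (rule norm_triangle_ineq2)
      moreover have "norm (1 / of_nat (Suc k) :: complex) = 1 / real (Suc k)"
        by (simp add: norm_divide del: of_nat_Suc)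
      ultimately have "a / 2 \<le> norm (lam - 1 / of_nat (Suc k))" using inv by (simp add: a_def)
      then show ?thesis using e0S[of "a/2"] by (simp add: S_def)
    qed
  qed
qed

lemma star_mem:
  assumes t: "0 \<le> t" "t < 1" and nl: "lam \<notin> Lam" and nz: "lam \<noteq> 0"
  shows "lam \<in> resolvent_star (Ct t)"
proof -
  obtain \<epsilon> where e: "0 < \<epsilon>" and ek: "\<And>k. 2 * \<epsilon> \<le> norm (lam - 1 / of_nat (Suc k))"
    and el: "2 * \<epsilon> \<le> norm lam"
    using eps_exists[OF nl nz] by blast
  define L where "L = norm lam + \<epsilon>"
  have cond: "(\<forall>k. \<epsilon> \<le> norm (mu - 1 / of_nat (Suc k))) \<and> \<epsilon> \<le> norm mu \<and> norm mu \<le> L"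
    if mu: "mu \<in> ball lam \<epsilon>" for mu
  proof (intro conjI allI)
    have dm: "norm (lam - mu) < \<epsilon>" using mu by (simp add: dist_norm)
    fix k :: nat
    have "norm (lam - 1 / of_nat (Suc k)) \<le> norm (lam - mu) + norm (mu - 1 / of_nat (Suc k))"
      using norm_triangle_ineq[of "lam - mu" "mu - 1 / of_nat (Suc k)"] by simp
    then show "\<epsilon> \<le> norm (mu - 1 / of_nat (Suc k))" using ek[of k] dm by linarith
  next
    have dm: "norm (lam - mu) < \<epsilon>" using mu by (simp add: dist_norm)
    have "norm lam \<le> norm (lam - mu) + norm mu" using norm_triangle_sub[of lam mu] by simp
    then show "\<epsilon> \<le> norm mu" using el dm by linarith
    have "norm mu \<le> norm (mu - lam) + norm lam" using norm_triangle_sub[of mu lam] by simp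
    then show "norm mu \<le> L" using dm by (simp add: L_def norm_minus_commute)
  qed
  have nlU: "mu \<notin> Lam" if mu: "mu \<in> ball lam \<epsilon>" for mu
  proof
    assume "mu \<in> Lam"
    then obtain n where "mu = 1 / of_nat (n + 1)" unfolding Lam_def by blast
    then have "norm (mu - 1 / of_nat (Suc n)) = 0" by simp
    moreover have "\<epsilon> \<le> norm (mu - 1 / of_nat (Suc n))" using cond[OF mu] by blast
    ultimately show False using e by simp
  qed
  have gdU: "\<exists>D\<ge>0. \<forall>mu\<in>ball lam \<epsilon>. good t mu D \<rho>" if rho: "0 < \<rho>" "\<rho> < 1" for \<rho>
  proof -
    obtain D where D: "D \<ge> 0" "\<forall>mu::complex. (\<forall>k. \<epsilon> \<le> norm (mu - 1 / of_nat (Suc k))) \<and> \<epsilon> \<le> norm mu \<and> norm mu \<le> L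
            \<longrightarrow> good t mu D \<rho>"
      using good_uniform[OF t e e rho(1), of L] rho by auto
    show ?thesis using D cond by blast
  qed
  have "ball lam \<epsilon> \<subseteq> resolvent_set (Ct t)"
  proof
    fix mu assume mu: "mu \<in> ball lam \<epsilon>"
    show "mu \<in> resolvent_set (Ct t)"
    proof (rule resolvent_mem[OF t nlU[OF mu]])
      fix \<rho> :: real assume "0 < \<rho>" "\<rho> < 1"
      then show "\<exists>D\<ge>0. good t mu D \<rho>" using gdU mu by blast
    qed
  qed
  moreover have "equicont_ops {S. \<exists>mu\<in>ball lam \<epsilon>. cont_lin_op S \<and> is_inverse_of (Ct t) mu S}"
    by (rule equi_inverses[OF t nlU gdU])
  ultimately show ?thesis unfolding resolvent_star_def using e by blast
qed

lemma zero_res: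
  assumes t: "0 \<le> t" "t < 1"
  shows "0 \<in> resolvent_set (Ct t)"
proof (rule resolvent_mem[OF t])
  have "(1 / of_nat (n + 1) :: complex) \<noteq> 0" for n by (simp only: divide_eq_0_iff of_nat_eq_0_iff) simp
  then show "0 \<notin> Lam" unfolding Lam_def by auto
  fix \<rho> :: real assume "0 < \<rho>" "\<rho> < 1"
  then have "good t 0 1 \<rho>" by (intro good_zero) simp
  then show "\<exists>D\<ge>0. good t 0 D \<rho>" by (intro exI[of _ 1]) simp
qed

lemma star_sub_res: "resolvent_star T \<subseteq> resolvent_set T"
  unfolding resolvent_star_def by auto

theorem proposition3p7:
  fixes t :: real
  assumes "0 \<le> t" and "t < 1"
  shows "point_spectrum_H (Ct t) = {1 / of_nat (n + 1) | n :: nat. True}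
       \<and> spectrum_H (Ct t) = {1 / of_nat (n + 1) | n :: nat. True}
       \<and> spectrum_star (Ct t) = {1 / of_nat (n + 1) | n :: nat. True} \<union> {0}"
proof -
  note t = assms
  have P: "point_spectrum_H (Ct t) = Lam"
    using Lam_sub_pt[OF t] pt_sub_Lam[OF t] by blast
  have Sp: "spectrum_H (Ct t) = Lam"
  proof
    show "Lam \<subseteq> spectrum_H (Ct t)" using Lam_sub_pt[OF t] ptspec_sub_spec[OF t] by blast
    show "spectrum_H (Ct t) \<subseteq> Lam"
    proof
      fix mu assume mu: "mu \<in> spectrum_H (Ct t)"
      show "mu \<in> Lam"
      proof (rule ccontr)
        assume nl: "mu \<notin> Lam"
        have "mu \<in> resolvent_set (Ct t)"
        proof (cases "mu = 0")
          case True then show ?thesis using zero_res[OF t] by simp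
        next
          case False then show ?thesis using star_mem[OF t nl] star_sub_res by blast
        qed
        then show False using mu by (simp add: spectrum_H_def)
      qed
    qed
  qed
  have St: "spectrum_star (Ct t) = Lam \<union> {0}"
  proof
    show "spectrum_star (Ct t) \<subseteq> Lam \<union> {0}"
    proof
      fix mu assume mu: "mu \<in> spectrum_star (Ct t)"
      show "mu \<in> Lam \<union> {0}"
      proof (rule ccontr)
        assume "mu \<notin> Lam \<union> {0}"
        then have "mu \<in> resolvent_star (Ct t)" using star_mem[OF t] by blast
        then show False using mu by (simp add: spectrum_star_def)
      qed
    qed
    have "Lam \<subseteq> spectrum_star (Ct t)"
      using Sp star_sub_res[of "Ct t"] unfolding spectrum_star_def spectrum_H_def by blast
    moreover have "0 \<in> spectrum_star (Ct t)"
    proof -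
      have "0 \<notin> resolvent_star (Ct t)"
      proof
        assume "0 \<in> resolvent_star (Ct t)"
        then obtain \<delta> where d: "\<delta> > 0" "ball 0 \<delta> \<subseteq> resolvent_set (Ct t)"
          unfolding resolvent_star_def by blast
        obtain n :: nat where n: "1 / \<delta> < real n" using reals_Archimedean2 by blast
        have "norm (1 / of_nat (n + 1) :: complex) < \<delta>"
        proof -
          have "1 / \<delta> < real (n + 1)" using n by simp
          then have "1 / real (n + 1) < \<delta>" using d(1) by (simp add: field_simps)
          then show ?thesis by (simp add: norm_divide del: of_nat_Suc)
        qed
        then have "(1 / of_nat (n + 1) :: complex) \<in> resolvent_set (Ct t)" using d(2) by auto
        moreover have "(1 / of_nat (n + 1) :: complex) \<in> spectrum_H (Ct t)"
          using Sp unfolding Lam_def by blast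
        ultimately show False by (simp add: spectrum_H_def)
      qed
      then show ?thesis by (simp add: spectrum_star_def)
    qed
    ultimately show "Lam \<union> {0} \<subseteq> spectrum_star (Ct t)" by blast
  qed
  show ?thesis using P Sp St unfolding Lam_def by simp
qed


end
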